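(* Let $\phi:\mathbb{M}_n\to\mathbb{M}_m$ be a positive linear map with Hilbert–Schmidt adjoint $\phi^*:\mathbb{M}_m\to\mathbb{M}_n$. Suppose that either \[ \mathrm{Tr}[\phi^*(K^*X^{+}K)] \geq \mathrm{Tr}[\phi^*(K)^*\phi^*(X)^{+}\phi^*(K)] \] holds for every $(K,X)\in\mathbb{M}_m\times\mathbb{M}_m^+$ with $\ker(X)\subseteq\ker(K^* )$, or \[ \mathrm{Tr}[K^*X^{+}K] \geq \mathrm{Tr}[\phi^*(K)^*\phi^*(X)^{+}\phi^*(K)] \] holds for every $(K,X)\in\mathbb{M}_m\times\mathbb{M}_m^+$ with $\ker(X)\subseteq\ker(K^* )$. Then $\ker(\phi^*(X))\subseteq\ker(\phi^*(K)^* )$ for every $(K,X)\in\mathbb{M}_m\times\mathbb{M}_m^+$ with $\ker(X)\subseteq\ker(K^* )$.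
   Context: $\mathbb{M}_n$ denotes the $n\times n$ complex matrices and $\mathbb{M}_n^+$ the positive semidefinite ones; $Z^+$ denotes the Moore–Penrose generalized inverse; the adjoint is with respect to $\langle A,B\rangle=\mathrm{Tr}[A^*B]$. A positive map sends positive semidefinite matrices to positive semidefinite matrices. *)

theory Defs
  imports "HOL-Analysis.Analysis" "HOL-Library.Complex_Order"
begin

definition cadj :: "complex^'n^'m \<Rightarrow> complex^'m^'n" where
  "cadj A = (\<chi> i j. cnj (A $ j $ i))"

definition cscale :: "complex \<Rightarrow> complex^'n^'m \<Rightarrow> complex^'n^'m" where
  "cscale c A = (\<chi> i j. c * A $ i $ j)"

definition ker :: "complex^'n^'m \<Rightarrow> (complex^'n) set" where
  "ker A = {x. A *v x = 0}"

definition psd :: "complex^'n^'n \<Rightarrow> bool" where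
  "psd A \<longleftrightarrow> cadj A = A \<and> (\<forall>x::complex^'n. (\<Sum>i\<in>UNIV. cnj (x $ i) * (A *v x) $ i) \<ge> 0)"

definition clinear_map :: "(complex^'n^'n \<Rightarrow> complex^'m^'m) \<Rightarrow> bool" where
  "clinear_map f \<longleftrightarrow> (\<forall>A B. f (A + B) = f A + f B) \<and> (\<forall>c A. f (cscale c A) = cscale c (f A))"

definition positive_map :: "(complex^'n^'n \<Rightarrow> complex^'m^'m) \<Rightarrow> bool" where
  "positive_map f \<longleftrightarrow> (\<forall>A. psd A \<longrightarrow> psd (f A))"

text \<open>Moore--Penrose generalized inverse: the unique matrix satisfying the Penrose equations.\<close>
definition mp_inv :: "complex^'n^'n \<Rightarrow> complex^'n^'n" where
  "mp_inv A = (THE B. A ** B ** A = A \<and> B ** A ** B = B \<and>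
                     cadj (A ** B) = A ** B \<and> cadj (B ** A) = B ** A)"

end

theory Submission
  imports Defs
begin

definition ip :: "complex^'n \<Rightarrow> complex^'n \<Rightarrow> complex" where
  "ip x y = (\<Sum>i\<in>UNIV. cnj (x $ i) * y $ i)"

definition outer :: "complex^'n \<Rightarrow> complex^'n \<Rightarrow> complex^'n^'n" where
  "outer x y = (\<chi> i j. x $ i * cnj (y $ j))"

lemma cadj_cadj[simp]: "cadj (cadj A) = A"
  by (simp add: cadj_def vec_eq_iff)

lemma cadj_mult: "cadj (A ** B) = cadj B ** cadj A"
  by (simp add: cadj_def vec_eq_iff matrix_matrix_mult_def mult.commute)

lemma cadj_add: "cadj (A + B) = cadj A + cadj B"
  by (simp add: cadj_def vec_eq_iff)

lemma cadj_diff: "cadj (A - B) = cadj A - cadj B"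
  by (simp add: cadj_def vec_eq_iff)

lemma cadj_scaleR: "cadj (r *\<^sub>R A) = r *\<^sub>R cadj A"
  by (simp add: cadj_def vec_eq_iff)

lemma cadj_cscale: "cadj (cscale c A) = cscale (cnj c) (cadj A)"
  by (simp add: cadj_def cscale_def vec_eq_iff)

lemma cadj_mat1[simp]: "cadj (mat 1) = mat 1"
  by (simp add: cadj_def mat_def vec_eq_iff)

lemma cadj_0[simp]: "cadj 0 = 0"
  by (simp add: cadj_def vec_eq_iff)

lemma cadj_outer: "cadj (outer x y) = outer y x"
  by (simp add: cadj_def outer_def vec_eq_iff)

lemma ip_mat: "ip x (A *v y) = ip (cadj A *v x) y"
  apply (simp add: ip_def matrix_vector_mult_def cadj_def sum_distrib_left sum_distrib_right)
  apply (subst sum.swap) apply (simp add: mult_ac)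
  done

lemma ip_herm: "cadj A = A \<Longrightarrow> ip x (A *v y) = ip (A *v x) y"
  by (metis ip_mat)

lemma ip_cnj: "ip x y = cnj (ip y x)"
  by (simp add: ip_def mult.commute)

lemma ip_add_right: "ip x (y + z) = ip x y + ip x z"
  by (simp add: ip_def algebra_simps sum.distrib)
lemma ip_add_left: "ip (x + y) z = ip x z + ip y z"
  by (simp add: ip_def algebra_simps sum.distrib)
lemma ip_diff_right: "ip x (y - z) = ip x y - ip x z"
  by (simp add: ip_def algebra_simps sum_subtractf)
lemma ip_diff_left: "ip (x - y) z = ip x z - ip y z"
  by (simp add: ip_def algebra_simps sum_subtractf)
lemma ip_smult_right: "ip x (c *s y) = c * ip x y"
  by (simp add: ip_def sum_distrib_left mult_ac)
lemma ip_smult_left: "ip (c *s x) y = cnj c * ip x y"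
  by (simp add: ip_def sum_distrib_left mult_ac)
lemma ip_zero_right[simp]: "ip x 0 = 0" by (simp add: ip_def)
lemma ip_zero_left[simp]: "ip 0 x = 0" by (simp add: ip_def)

lemma ip_self: "ip x x = of_real (\<Sum>i\<in>UNIV. (cmod (x $ i))^2)"
proof -
  have "cnj (x $ i) * x $ i = of_real ((cmod (x $ i))^2)" for i
    by (simp add: complex_norm_square mult.commute del: of_real_power)
  then show ?thesis by (simp add: ip_def)
qed

lemma ip_self_Re: "Re (ip x x) = (\<Sum>i\<in>UNIV. (cmod (x $ i))^2)"
  by (simp add: ip_self)

lemma ip_self_Im: "Im (ip x x) = 0"
  by (simp add: ip_self)

lemma ip_self_eq0: "ip x x = 0 \<Longrightarrow> x = 0"
proof -
  assume "ip x x = 0"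
  then have "(\<Sum>i\<in>UNIV. (cmod (x $ i))^2) = 0" unfolding ip_self of_real_eq_0_iff .
  then have "\<forall>i\<in>UNIV. (cmod (x $ i))^2 = 0" by (subst sum_nonneg_eq_0_iff[symmetric]) auto
  then show "x = 0" by (simp add: vec_eq_iff)
qed

lemma mv_smult: "(A::complex^'n^'m) *v (c *s x) = c *s (A *v x)"
  by (auto simp: matrix_vector_mult_def vec_eq_iff sum_distrib_left algebra_simps intro!: sum.cong)

lemma mv_add: "(A::complex^'n^'m) *v (x + y) = A *v x + A *v y"
  by (simp add: matrix_vector_right_distrib)

lemma mv_diff: "(A::complex^'n^'m) *v (x - y) = A *v x - A *v y"
  by (simp add: matrix_vector_mult_def vec_eq_iff sum_subtractf[symmetric] right_diff_distrib)

lemma outer_mv: "outer x y *v z = ip y z *s x"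
  by (simp add: outer_def ip_def matrix_vector_mult_def vec_eq_iff sum_distrib_left mult_ac)

lemma trace_outer_mult: "trace (M ** outer x x) = ip x (M *v x)"
  apply (simp add: trace_def outer_def ip_def matrix_matrix_mult_def matrix_vector_mult_def sum_distrib_left)
  apply (auto simp: algebra_simps intro!: sum.cong)
  done

lemma trace_outer_mult2: "trace (outer y y ** N) = ip y (N *v y)"
  by (metis trace_mul_sym trace_outer_mult)

lemma matrix_eq_mv: "(\<And>x. A *v x = B *v x) \<Longrightarrow> A = B"
  using matrix_eq by blast

lemma herm_form_real: "cadj A = A \<Longrightarrow> Im (ip x (A *v x)) = 0"
proof -
  assume h: "cadj A = A"
  have "ip x (A *v x) = cnj (ip x (A *v x))"
    using ip_herm[OF h, of x x] ip_cnj[of "A *v x" x] by simp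
  then show ?thesis by (metis cnj.simps(2) complex.expand neg_equal_zero)
qed

lemma psd_iff: "psd A \<longleftrightarrow> cadj A = A \<and> (\<forall>x. Re (ip x (A *v x)) \<ge> 0)"
  unfolding psd_def ip_def[symmetric]
  using herm_form_real by (auto simp: less_eq_complex_def)

lemma form_expand:
  fixes A :: "complex^'n^'n"
  assumes h: "cadj A = A"
  shows "ip (v - s *s y) (A *v (v - s *s y)) =
     ip v (A *v v) - s * ip v (A *v y) - cnj s * cnj (ip v (A *v y)) + cnj s * s * ip y (A *v y)"
proof -
  have e: "ip y (A *v v) = cnj (ip v (A *v y))"
    using ip_herm[OF h, of y v] ip_cnj[of "A *v y" v] by simp
  show ?thesis
    by (simp add: mv_diff mv_smult ip_diff_left ip_diff_right ip_smult_left ip_smult_right e algebra_simps)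
qed

lemma quad_lemma:
  fixes a b k :: real
  assumes "\<And>t. a - 2 * t * k + t^2 * k * b \<ge> 0" "k \<ge> 0" "b \<ge> 0"
  shows "k \<le> a * b"
proof (cases "b = 0")
  case True
  show ?thesis
  proof (rule ccontr)
    assume "\<not> k \<le> a * b"
    then have k: "k > 0" using True by simp
    have "a - 2 * ((a+1)/(2*k)) * k + ((a+1)/(2*k))^2 * k * b \<ge> 0" by (rule assms(1))
    then show False using k True by (simp add: field_simps)
  qed
next
  case False
  then have b: "b > 0" using assms by simp
  have "a - 2 * (1/b) * k + (1/b)^2 * k * b \<ge> 0" by (rule assms(1))
  then have "a - k / b \<ge> 0" using b by (simp add: field_simps power2_eq_square)
  then show ?thesis using b by (simp add: field_simps)
qed

lemma cs_psd:
  fixes A :: "complex^'n^'n"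
  assumes h: "cadj A = A" and p: "\<And>x. Re (ip x (A *v x)) \<ge> 0"
  shows "(cmod (ip v (A *v y)))^2 \<le> Re (ip v (A *v v)) * Re (ip y (A *v y))"
proof -
  define c where "c = ip v (A *v y)"
  have "Re (ip v (A *v v)) - 2 * t * (cmod c)^2 + t^2 * (cmod c)^2 * Re (ip y (A *v y)) \<ge> 0" for t :: real
  proof -
    have "Re (ip (v - (of_real t * cnj c) *s y) (A *v (v - (of_real t * cnj c) *s y))) \<ge> 0" by (rule p)
    also have "ip (v - (of_real t * cnj c) *s y) (A *v (v - (of_real t * cnj c) *s y)) =
       ip v (A *v v) - (of_real t * cnj c) * c - cnj (of_real t * cnj c) * cnj c + cnj (of_real t * cnj c) * (of_real t * cnj c) * ip y (A *v y)"
      unfolding form_expand[OF h] c_def ..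
    finally have fin: "0 \<le> Re (ip v (A *v v) - complex_of_real t * cnj c * c - cnj (complex_of_real t * cnj c) * cnj c +
         cnj (complex_of_real t * cnj c) * (complex_of_real t * cnj c) * ip y (A *v y))" .
    then show ?thesis
    proof -
      have "(cmod c)^2 = Re c * Re c + Im c * Im c" by (metis cmod_power2 power2_eq_square)
      then show ?thesis using fin by (simp add: power2_eq_square algebra_simps)
    qed
  qed
  then show ?thesis unfolding c_def[symmetric]
    by (intro quad_lemma) (auto intro: p)
qed

lemma psd_kernel:
  fixes A :: "complex^'n^'n"
  assumes "psd A" "Re (ip x (A *v x)) = 0"
  shows "A *v x = 0"
proof -
  have h: "cadj A = A" and p: "\<And>x. Re (ip x (A *v x)) \<ge> 0" using assms(1) psd_iff by auto
  have "(cmod (ip (A *v x) (A *v x)))^2 \<le> Re (ip (A *v x) (A *v (A *v x))) * Re (ip x (A *v x))"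
    by (rule cs_psd[OF h p])
  then have "cmod (ip (A *v x) (A *v x)) = 0" using assms(2) by simp
  then show ?thesis using ip_self_eq0 by auto
qed

definition pen :: "complex^'n^'n \<Rightarrow> complex^'n^'n \<Rightarrow> bool" where
  "pen A B \<longleftrightarrow> A ** B ** A = A \<and> B ** A ** B = B \<and>
                     cadj (A ** B) = A ** B \<and> cadj (B ** A) = B ** A"

lemma pen_unique:
  assumes "pen A B" "pen A C" shows "B = C"
proof -
  have a1: "A ** B ** A = A" "B ** A ** B = B" "cadj (A ** B) = A ** B" "cadj (B ** A) = B ** A"
    and a2: "A ** C ** A = A" "C ** A ** C = C" "cadj (A ** C) = A ** C" "cadj (C ** A) = C ** A"
    using assms unfolding pen_def by auto
  have "B = B ** (A ** B)" using a1(2) by (simp add: matrix_mul_assoc)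
  also have "\<dots> = B ** cadj (A ** B)" using a1(3) by simp
  also have "\<dots> = B ** cadj (A ** C ** A ** B)" using a2(1) by simp
  also have "\<dots> = B ** (cadj (A ** B) ** cadj (A ** C))"
    by (simp add: cadj_mult matrix_mul_assoc)
  also have "\<dots> = B ** ((A ** B) ** (A ** C))" using a1(3) a2(3) by simp
  also have "\<dots> = (B ** A ** B) ** A ** C" by (simp add: matrix_mul_assoc)
  also have "\<dots> = B ** A ** C" using a1(2) by simp
  finally have 1: "B = B ** A ** C" .
  have "C = (C ** A) ** C" using a2(2) by (simp add: matrix_mul_assoc)
  also have "\<dots> = cadj (C ** A) ** C" using a2(4) by simp
  also have "\<dots> = cadj (C ** (A ** B ** A)) ** C" using a1(1) by simp
  also have "\<dots> = (cadj (B ** A) ** cadj (C ** A)) ** C"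
    by (simp add: cadj_mult matrix_mul_assoc)
  also have "\<dots> = ((B ** A) ** (C ** A)) ** C" using a1(4) a2(4) by simp
  also have "\<dots> = B ** (A ** C ** A) ** C" by (simp add: matrix_mul_assoc)
  also have "\<dots> = B ** A ** C" using a2(1) by (simp add: matrix_mul_assoc)
  finally show ?thesis using 1 by simp
qed

lemma mv_scaleR: "(A::complex^'n^'m) *v (r *\<^sub>R x) = r *\<^sub>R (A *v x)"
  by (simp add: matrix_vector_mult_def vec_eq_iff scaleR_sum_right)

lemma inner_ip: "inner (z::complex^'n) w = Re (ip z w)"
  by (simp add: inner_vec_def ip_def inner_complex_def Re_sum)

lemma herm_decomp:
  fixes A :: "complex^'n^'n"
  assumes h: "cadj A = A"
  obtains u z where "x = A *v u + z" "A *v z = 0"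
proof -
  let ?S = "range (\<lambda>u. A *v u)"
  have sub: "subspace ?S"
    unfolding subspace_def
  proof (intro conjI ballI allI)
    show "0 \<in> ?S" by (rule range_eqI[of _ _ 0]) simp
    fix x y assume "x \<in> ?S" "y \<in> ?S"
    then obtain a b where "x = A *v a" "y = A *v b" by auto
    then show "x + y \<in> ?S" by (metis mv_add rangeI)
  next
    fix c :: real and x assume "x \<in> ?S"
    then obtain a where "x = A *v a" by auto
    then show "c *\<^sub>R x \<in> ?S" by (metis mv_scaleR rangeI)
  qed
  then have sp: "span ?S = ?S" by (simp add: span_eq_iff)
  obtain y z where y: "y \<in> span ?S" and o: "\<And>w. w \<in> span ?S \<Longrightarrow> orthogonal z w" and xe: "x = y + z"
    using orthogonal_subspace_decomp_exists[of ?S x] by blast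
  from y sp obtain u where u: "y = A *v u" by auto
  have "orthogonal z (A *v (A *v z))" using o sp by auto
  then have "Re (ip z (A *v (A *v z))) = 0" by (simp add: orthogonal_def inner_ip)
  then have "Re (ip (A *v z) (A *v z)) = 0" using ip_herm[OF h] by simp
  then have "(\<Sum>i\<in>UNIV. (cmod ((A *v z) $ i))^2) = 0" by (simp add: ip_self_Re)
  then have "\<forall>i\<in>UNIV. (cmod ((A *v z) $ i))^2 = 0" by (subst sum_nonneg_eq_0_iff[symmetric]) auto
  then have "A *v z = 0" by (simp add: vec_eq_iff)
  then show ?thesis using that u xe by blast
qed

lemma herm_range_ker:
  fixes A :: "complex^'n^'n"
  assumes h: "cadj A = A" and "A *v q = 0" "q = A *v r"
  shows "q = 0"
proof -
  have "ip q q = ip (A *v r) q" using assms by simp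
  also have "\<dots> = ip r (A *v q)" using ip_herm[OF h] by simp
  finally show ?thesis using assms ip_self_eq0 by simp
qed

lemma col_eq: "A *v axis j 1 = (\<chi> i. (A::complex^'n^'m) $ i $ j)"
  by (simp add: matrix_vector_mult_def axis_def vec_eq_iff if_distrib cong: if_cong)

lemma mat_eq_cols: "(\<And>j. A *v axis j 1 = B *v axis j 1) \<Longrightarrow> A = (B::complex^'n^'m)"
  by (simp add: col_eq vec_eq_iff)

lemma pen_exists:
  fixes A :: "complex^'n^'n"
  assumes h: "cadj A = A"
  shows "\<exists>B. pen A B"
proof -
  have ex: "\<exists>u. A *v x = A *v (A *v u)" for x
  proof -
    obtain u z where "x = A *v u + z" "A *v z = 0" using herm_decomp[OF h] by blast
    then show ?thesis by (metis add.right_neutral mv_add)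
  qed
  define uu where "uu x = (SOME u. A *v x = A *v (A *v u))" for x
  have uu: "A *v x = A *v (A *v uu x)" for x unfolding uu_def by (rule someI_ex[OF ex])
  define T where "T = (\<chi> i j. uu (axis j 1) $ i)"
  have Tc: "T *v axis j 1 = uu (axis j 1)" for j unfolding col_eq T_def by (simp add: vec_eq_iff)
  have F1: "A ** A ** T = A"
    by (rule mat_eq_cols) (simp add: matrix_vector_mul_assoc[symmetric] Tc uu[symmetric])
  define P where "P = A ** T"
  have AP: "A ** P = A" using F1 by (simp add: P_def matrix_mul_assoc)
  have Pker: "P *v x = 0" if "A *v x = 0" for x
  proof (rule herm_range_ker[OF h])
    show "P *v x = A *v (T *v x)" by (simp add: P_def matrix_vector_mul_assoc)
    show "A *v (P *v x) = 0" using that AP by (simp add: matrix_vector_mul_assoc)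
  qed
  have PA: "P ** A = A"
  proof (rule matrix_eq_mv)
    fix x
    have "P *v (A *v x) - A *v x = 0"
    proof (rule herm_range_ker[OF h])
      show "A *v (P *v (A *v x) - A *v x) = 0"
        using AP by (simp add: mv_diff matrix_vector_mul_assoc matrix_mul_assoc)
      show "P *v (A *v x) - A *v x = A *v (T *v (A *v x) - x)"
        by (simp add: P_def mv_diff matrix_vector_mul_assoc matrix_mul_assoc)
    qed
    then show "(P ** A) *v x = A *v x" by (simp add: matrix_vector_mul_assoc[symmetric])
  qed
  have PP: "P ** P = P"
  proof -
    have "P ** P = (P ** A) ** T" by (simp add: P_def matrix_mul_assoc)
    then show ?thesis using PA P_def by simp
  qed
  have Ph: "cadj P = P"
  proof (rule matrix_eq_mv)
    fix x
    obtain u z where xe: "x = A *v u + z" and z: "A *v z = 0" using herm_decomp[OF h] by blast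
    have "P *v x = A *v u"
      using PA Pker[OF z] by (simp add: xe mv_add matrix_vector_mul_assoc)
    moreover have "cadj P *v x = A *v u"
    proof -
      have "cadj P = cadj T ** A" by (simp add: P_def cadj_mult h)
      then have "cadj P *v x = cadj T *v (A *v (A *v u))"
        by (simp add: xe mv_add z matrix_vector_mul_assoc[symmetric])
      also have "\<dots> = cadj (A ** A ** T) *v u"
        by (simp add: cadj_mult h matrix_vector_mul_assoc matrix_mul_assoc)
      finally show ?thesis using F1 h by simp
    qed
    ultimately show "cadj P *v x = P *v x" by simp
  qed
  have PTA: "P ** T ** A = P"
  proof (rule matrix_eq_mv)
    fix x
    have "P *v (T *v (A *v x) - x) = 0"
    proof (rule Pker)
      show "A *v (T *v (A *v x) - x) = 0"
        using PA by (simp add: mv_diff matrix_vector_mul_assoc P_def matrix_mul_assoc)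
    qed
    then show "(P ** T ** A) *v x = P *v x"
      by (simp add: mv_diff matrix_vector_mul_assoc matrix_mul_assoc)
  qed
  define B where "B = P ** T ** P"
  have "A ** B ** A = A"
  proof -
    have "A ** B ** A = (A ** P) ** T ** (P ** A)" by (simp add: B_def matrix_mul_assoc)
    also have "\<dots> = P ** A" using AP PA by (simp add: P_def)
    finally show ?thesis using PA by simp
  qed
  moreover have "B ** A ** B = B"
  proof -
    have "B ** A ** B = P ** T ** ((P ** A) ** P) ** T ** P" by (simp add: B_def matrix_mul_assoc)
    also have "\<dots> = P ** T ** (A ** P) ** T ** P" using PA by simp
    also have "\<dots> = P ** T ** (A ** T) ** P" using AP by (simp add: matrix_mul_assoc)
    also have "\<dots> = P ** T ** (P ** P)" by (simp add: P_def matrix_mul_assoc)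
    finally show ?thesis using PP by (simp add: B_def)
  qed
  moreover have "A ** B = P"
  proof -
    have "A ** B = (A ** P) ** T ** P" by (simp add: B_def matrix_mul_assoc)
    also have "\<dots> = P ** P" using AP by (simp add: P_def)
    finally show ?thesis using PP by simp
  qed
  moreover have "B ** A = P"
  proof -
    have "B ** A = P ** T ** (P ** A)" by (simp add: B_def matrix_mul_assoc)
    then show ?thesis using PA PTA by simp
  qed
  ultimately have "pen A B" unfolding pen_def using Ph by simp
  then show ?thesis by blast
qed

lemma mp_inv_pen: "cadj A = A \<Longrightarrow> pen A (mp_inv A)"
proof -
  assume h: "cadj A = A"
  obtain B where B: "pen A B" using pen_exists[OF h] by blast
  have "pen A (THE B. pen A B)"
    by (rule theI[of "pen A" B]) (use B pen_unique in auto)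
  then show ?thesis unfolding mp_inv_def pen_def[symmetric] .
qed

lemma mp_inv_eq: "pen A B \<Longrightarrow> mp_inv A = B"
  unfolding mp_inv_def pen_def[symmetric] using pen_unique by blast

lemma pen_cadj: "pen A B \<Longrightarrow> pen (cadj A) (cadj B)"
proof -
  assume p: "pen A B"
  have e: "cadj (X ** Y ** Z) = cadj Z ** cadj Y ** cadj X" for X Y Z :: "complex^'n^'n"
    by (simp add: cadj_mult matrix_mul_assoc)
  show ?thesis using p unfolding pen_def
    by (metis e cadj_mult cadj_cadj)
qed

lemma mp_inv_herm:
  assumes h: "cadj A = A"
  shows "cadj (mp_inv A) = mp_inv A" "A ** mp_inv A = mp_inv A ** A"
proof -
  have p: "pen A (mp_inv A)" by (rule mp_inv_pen[OF h])
  have "pen A (cadj (mp_inv A))" using pen_cadj[OF p] h by simp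
  then show c: "cadj (mp_inv A) = mp_inv A" using pen_unique p by blast
  have "cadj (mp_inv A ** A) = mp_inv A ** A" using p unfolding pen_def by simp
  then show "A ** mp_inv A = mp_inv A ** A" using c h by (simp add: cadj_mult)
qed

lemma mm_add_r: "((A::complex^'n^'m) + B) ** C = A ** C + B ** C"
  by (simp add: matrix_matrix_mult_def vec_eq_iff sum.distrib distrib_right)
lemma mm_diff_r: "((A::complex^'n^'m) - B) ** C = A ** C - B ** C"
  by (simp add: matrix_matrix_mult_def vec_eq_iff sum_subtractf[symmetric] left_diff_distrib)
lemma mm_diff_l: "(C::complex^'n^'m) ** (A - B) = C ** A - C ** B"
  by (simp add: matrix_matrix_mult_def vec_eq_iff sum_subtractf[symmetric] right_diff_distrib)
lemma cscale_mm: "cscale c (A::complex^'n^'m) ** B = cscale c (A ** B)"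
  by (simp add: cscale_def matrix_matrix_mult_def vec_eq_iff sum_distrib_left mult.assoc)
lemma trace_cscale: "trace (cscale c A) = c * trace A"
  by (simp add: cscale_def trace_def sum_distrib_left)
lemma trace_scaleR: "trace (r *\<^sub>R (A::complex^'n^'n)) = r *\<^sub>R trace A"
  by (simp add: trace_def scaleR_sum_right)
lemma trace_add': "trace ((A::complex^'n^'n) + B) = trace A + trace B"
  by (simp add: trace_def sum.distrib)

lemma ip_axis: "ip (axis i 1) z = z $ i"
proof -
  have "cnj (axis i 1 $ k) * z $ k = (if k = i then z $ k else 0)" for k
    by (simp add: axis_def)
  then show ?thesis by (simp add: ip_def)
qed

lemma ip_axis_mv: "ip (axis i 1) (M *v axis j 1) = (M::complex^'n^'n) $ i $ j"
  by (simp add: ip_axis col_eq)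

lemma trace_inj:
  fixes M N :: "complex^'n^'m"
  assumes "\<And>B. trace (cadj M ** B) = trace (cadj N ** B)"
  shows "M = N"
proof -
  have "M $ a $ b = N $ a $ b" for a b
  proof -
    define E :: "complex^'n^'m" where "E = (\<chi> k i. if k = a \<and> i = b then 1 else 0)"
    have t: "trace (cadj X ** E) = cnj (X $ a $ b)" for X :: "complex^'n^'m"
    proof -
      have "(cadj X ** E) $ i $ i = (if i = b then cnj (X $ a $ b) else 0)" for i
      proof -
        have "cadj X $ i $ k * E $ k $ i = (if k = a then (if i = b then cnj (X $ a $ b) else 0) else 0)" for k
          by (simp add: E_def cadj_def)
        then show ?thesis by (simp add: matrix_matrix_mult_def)
      qed
      then show ?thesis by (simp add: trace_def)
    qed
    show ?thesis using assms[of E] unfolding t by simp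
  qed
  then show ?thesis by (simp add: vec_eq_iff)
qed

lemma form_expand_gen:
  fixes M :: "complex^'n^'n"
  shows "ip (u + c *s v) (M *v (u + c *s v)) =
     ip u (M *v u) + c * ip u (M *v v) + cnj c * ip v (M *v u) + cnj c * c * ip v (M *v v)"
  by (simp add: mv_add mv_smult ip_add_left ip_add_right ip_smult_left ip_smult_right algebra_simps)

lemma t1: fixes p q r s :: complex assumes "Im (p + 1 * q + cnj 1 * r + cnj 1 * 1 * s) = 0" "Im p = 0" "Im s = 0"
 shows "Im q + Im r = 0" using assms by simp
lemma t2: fixes p q r s :: complex assumes "Im (p + \<i> * q + cnj \<i> * r + cnj \<i> * \<i> * s) = 0" "Im p = 0" "Im s = 0"
 shows "Re q - Re r = 0" using assms by simp

lemma real_form_herm: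
  fixes M :: "complex^'n^'n"
  assumes r: "\<And>x. Im (ip x (M *v x)) = 0"
  shows "cadj M = M"
proof -
  have "cnj (M $ j $ i) = M $ i $ j" for i j
  proof -
    have 1: "Im (M $ i $ i) = 0" "Im (M $ j $ j) = 0"
      using r[of "axis i 1"] r[of "axis j 1"] by (simp_all add: ip_axis_mv)
    have 2: "Im (ip (axis i 1 + 1 *s axis j 1) (M *v (axis i 1 + 1 *s axis j 1))) = 0" by (rule r)
    have 3: "Im (ip (axis i 1 + \<i> *s axis j 1) (M *v (axis i 1 + \<i> *s axis j 1))) = 0" by (rule r)
    have a: "Im (M $ i $ j) + Im (M $ j $ i) = 0"
      by (rule t1[OF 2[unfolded form_expand_gen ip_axis_mv] 1])
    have b: "Re (M $ i $ j) - Re (M $ j $ i) = 0"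
      by (rule t2[OF 3[unfolded form_expand_gen ip_axis_mv] 1])
    show ?thesis using a b by (simp add: complex_eq_iff)
  qed
  then show ?thesis by (simp add: cadj_def vec_eq_iff)
qed

lemma outer_psd: "psd (outer y y)"
  unfolding psd_iff
proof (intro conjI allI)
  show "cadj (outer y y) = outer y y" by (simp add: cadj_outer)
  fix x
  have "ip x (outer y y *v x) = ip y x * cnj (ip y x)"
    by (simp add: outer_mv ip_smult_right ip_cnj[of x y] mult.commute)
  then show "Re (ip x (outer y y *v x)) \<ge> 0"
    by (simp add: complex_mult_cnj)
qed

lemma col_entry: "(Y *v axis l 1) $ k = (Y::complex^'n^'n) $ k $ l"
  by (simp add: col_eq)

lemma trace_psd_mult:
  fixes Y N :: "complex^'n^'n"
  assumes "psd Y" "psd N"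
  shows "Re (trace (Y ** N)) \<ge> 0 \<and> Im (trace (Y ** N)) = 0"
  using assms(1)
proof (induction "card {j. Y *v axis j 1 \<noteq> 0}" arbitrary: Y rule: less_induct)
  case less
  have hY: "cadj Y = Y" and pY: "\<And>x. Re (ip x (Y *v x)) \<ge> 0" using less.prems psd_iff by auto
  have hN: "cadj N = N" and pN: "\<And>x. Re (ip x (N *v x)) \<ge> 0" using assms(2) psd_iff by auto
  show ?case
  proof (cases "\<exists>j. Y *v axis j 1 \<noteq> 0")
    case False
    then have "Y = 0" by (intro mat_eq_cols) simp
    then show ?thesis by (simp add: trace_def)
  next
    case True
    then obtain j where cj: "Y *v axis j 1 \<noteq> 0" by blast
    define c where "c = Y *v axis j 1"
    define d where "d = Re (Y $ j $ j)"
    have Yjj: "Y $ j $ j = ip (axis j 1) c" unfolding c_def by (simp add: ip_axis_mv)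
    have d0: "d \<ge> 0" using pY[of "axis j 1"] Yjj by (simp add: d_def c_def)
    have "Im (Y $ j $ j) = 0" using herm_form_real[OF hY, of "axis j 1"] Yjj by (simp add: c_def)
    then have Yjj': "Y $ j $ j = of_real d" by (simp add: d_def complex_eq_iff)
    have "d \<noteq> 0"
    proof
      assume "d = 0"
      then have "Re (ip (axis j 1) (Y *v axis j 1)) = 0" using Yjj Yjj' c_def by simp
      then have "Y *v axis j 1 = 0" by (rule psd_kernel[OF less.prems])
      then show False using cj by simp
    qed
    then have dp: "d > 0" using d0 by simp
    define y where "y = of_real (1 / sqrt d) *s c"
    define Y' where "Y' = Y - outer y y"
    have ipy: "ip y x = of_real (1 / sqrt d) * ip (axis j 1) (Y *v x)" for x
      unfolding y_def c_def by (simp add: ip_smult_left ip_herm[OF hY])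
    have psdY': "psd Y'"
      unfolding psd_iff
    proof (intro conjI allI)
      show "cadj Y' = Y'" by (simp add: Y'_def cadj_diff cadj_outer hY)
      fix x
      have cs: "(cmod (ip (axis j 1) (Y *v x)))^2 \<le> d * Re (ip x (Y *v x))"
        using cs_psd[OF hY pY, of "axis j 1" x] Yjj c_def d_def by simp
      have "ip x (outer y y *v x) = ip y x * cnj (ip y x)"
        by (simp add: outer_mv ip_smult_right ip_cnj[of x y] mult.commute)
      then have "Re (ip x (outer y y *v x)) = (cmod (ip y x))^2"
        by (simp add: complex_mult_cnj cmod_power2)
      also have "\<dots> = (cmod (ip (axis j 1) (Y *v x)))^2 / d"
        using dp by (simp add: ipy norm_divide power_divide)
      also have "\<dots> \<le> Re (ip x (Y *v x))" using cs dp by (simp add: field_simps)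
      finally show "Re (ip x (Y' *v x)) \<ge> 0"
        by (simp add: Y'_def matrix_vector_mult_diff_rdistrib ip_diff_right)
    qed
    have Y'col: "Y' *v axis l 1 = Y *v axis l 1 - cnj (y $ l) *s y" for l
    proof -
      have "ip y (axis l 1) = cnj (y $ l)" by (simp add: ip_cnj[of y] ip_axis)
      then show ?thesis by (simp add: Y'_def matrix_vector_mult_diff_rdistrib outer_mv)
    qed
    have yl: "y $ l = of_real (1 / sqrt d) * Y $ l $ j" for l
      by (simp add: y_def c_def col_entry)
    have sub: "{l. Y' *v axis l 1 \<noteq> 0} \<subset> {l. Y *v axis l 1 \<noteq> 0}"
    proof
      show "{l. Y' *v axis l 1 \<noteq> 0} \<subseteq> {l. Y *v axis l 1 \<noteq> 0}"
      proof
        fix l assume l: "l \<in> {l. Y' *v axis l 1 \<noteq> 0}"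
        show "l \<in> {l. Y *v axis l 1 \<noteq> 0}"
        proof (rule ccontr)
          assume "l \<notin> {l. Y *v axis l 1 \<noteq> 0}"
          then have z: "Y *v axis l 1 = 0" by simp
          have "Y $ j $ l = 0" using arg_cong[OF z, of "\<lambda>v. v $ j"] by (simp add: col_entry)
          then have "Y $ l $ j = 0" using arg_cong[OF hY, of "\<lambda>M. M $ l $ j"] by (simp add: cadj_def)
          then have "y $ l = 0" by (simp add: yl)
          then show False using l z Y'col by simp
        qed
      qed
      have "Y' *v axis j 1 = 0"
      proof -
        have "cnj (y $ j) = of_real (1/sqrt d * d)" by (simp add: yl Yjj')
        then have "cnj (y $ j) *s y = of_real (1/sqrt d * d * (1/sqrt d)) *s c"
          unfolding y_def vector_smult_assoc of_real_mult by simp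
        also have "1/sqrt d * d * (1/sqrt d) = 1" using dp
          by (simp add: field_simps)
        finally have "cnj (y $ j) *s y = c" by simp
        then show ?thesis by (simp add: Y'col c_def)
      qed
      then show "{l. Y' *v axis l 1 \<noteq> 0} \<noteq> {l. Y *v axis l 1 \<noteq> 0}" using cj by auto
    qed
    have "card {l. Y' *v axis l 1 \<noteq> 0} < card {l. Y *v axis l 1 \<noteq> 0}"
      by (rule psubset_card_mono[OF _ sub]) simp
    then have IH: "Re (trace (Y' ** N)) \<ge> 0 \<and> Im (trace (Y' ** N)) = 0"
      using less.hyps psdY' by blast
    have "Y = Y' + outer y y" by (simp add: Y'_def)
    then have "trace (Y ** N) = trace (Y' ** N) + ip y (N *v y)"
      by (metis mm_add_r trace_add' trace_outer_mult2)
    then show ?thesis using IH pN[of y] herm_form_real[OF hN, of y] by simp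
  qed
qed

locale adjp =
  fixes \<phi> :: "complex^'n^'n \<Rightarrow> complex^'m^'m"
    and \<phi>s :: "complex^'m^'m \<Rightarrow> complex^'n^'n"
  assumes adj: "\<forall>A B. trace (cadj A ** \<phi> B) = trace (cadj (\<phi>s A) ** B)"
begin

lemma phis_add: "\<phi>s (A + B) = \<phi>s A + \<phi>s B"
proof (rule trace_inj)
  fix M
  show "trace (cadj (\<phi>s (A + B)) ** M) = trace (cadj (\<phi>s A + \<phi>s B) ** M)"
    using adj by (simp add: cadj_add mm_add_r trace_add' flip: adj[rule_format])
qed

lemma phis_scaleR: "\<phi>s (r *\<^sub>R A) = r *\<^sub>R \<phi>s A"
proof (rule trace_inj)
  fix M
  show "trace (cadj (\<phi>s (r *\<^sub>R A)) ** M) = trace (cadj (r *\<^sub>R \<phi>s A) ** M)"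
    by (simp add: cadj_scaleR trace_scaleR flip: scalar_matrix_assoc adj[rule_format])
qed

lemma phis_cscale: "\<phi>s (cscale c A) = cscale c (\<phi>s A)"
proof (rule trace_inj)
  fix M
  show "trace (cadj (\<phi>s (cscale c A)) ** M) = trace (cadj (cscale c (\<phi>s A)) ** M)"
    by (simp add: cadj_cscale cscale_mm trace_cscale flip: adj[rule_format])
qed

lemma phis_diff: "\<phi>s (A - B) = \<phi>s A - \<phi>s B"
proof -
  have "\<phi>s (A - B) = \<phi>s (A + (-1) *\<^sub>R B)" by simp
  also have "\<dots> = \<phi>s A - \<phi>s B" by (simp only: phis_add phis_scaleR) simp
  finally show ?thesis .
qed

lemma phis_psd:
  assumes pos: "positive_map \<phi>" and Y: "psd Y"
  shows "psd (\<phi>s Y)"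
proof -
  have key: "Re (ip w (\<phi>s Y *v w)) \<ge> 0 \<and> Im (ip w (\<phi>s Y *v w)) = 0" for w
  proof -
    have "psd (\<phi> (outer w w))" using pos outer_psd unfolding positive_map_def by blast
    then have t: "Re (trace (Y ** \<phi> (outer w w))) \<ge> 0 \<and> Im (trace (Y ** \<phi> (outer w w))) = 0"
      using trace_psd_mult[OF Y] by blast
    have hY: "cadj Y = Y" using Y psd_iff by auto
    have "ip w (cadj (\<phi>s Y) *v w) = trace (Y ** \<phi> (outer w w))"
    proof -
      have "ip w (cadj (\<phi>s Y) *v w) = trace (cadj (\<phi>s Y) ** outer w w)"
        by (simp add: trace_outer_mult)
      also have "\<dots> = trace (cadj Y ** \<phi> (outer w w))" using adj by simp
      finally show ?thesis using hY by simp
    qed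
    moreover have "ip w (cadj (\<phi>s Y) *v w) = cnj (ip w (\<phi>s Y *v w))"
      using ip_mat[of w "cadj (\<phi>s Y)" w] ip_cnj[of "\<phi>s Y *v w" w] by simp
    ultimately have "cnj (ip w (\<phi>s Y *v w)) = trace (Y ** \<phi> (outer w w))" by simp
    then have "ip w (\<phi>s Y *v w) = cnj (trace (Y ** \<phi> (outer w w)))" by (metis complex_cnj_cnj)
    then show ?thesis using t by simp
  qed
  then have "cadj (\<phi>s Y) = \<phi>s Y" by (intro real_form_herm) blast
  then show ?thesis using key psd_iff by blast
qed

end

lemma polar_outer:
  "cscale 4 (outer x y) = outer (x + y) (x + y) + cscale \<i> (outer (x + \<i> *s y) (x + \<i> *s y))
     + cscale (-1) (outer (x - y) (x - y)) + cscale (-\<i>) (outer (x - \<i> *s y) (x - \<i> *s y))"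
  by (auto simp: vec_eq_iff outer_def cscale_def complex_eq_iff algebra_simps)

lemma cscale_mv: "cscale c M *v w = c *s ((M::complex^'n^'m) *v w)"
  by (simp add: cscale_def matrix_vector_mult_def vec_eq_iff sum_distrib_left mult.assoc)

lemma scaleR_mv: "(r *\<^sub>R M) *v w = r *\<^sub>R ((M::complex^'n^'m) *v w)"
  by (simp add: matrix_vector_mult_def vec_eq_iff scaleR_sum_right)

lemma ip_scaleR_right: "ip x (r *\<^sub>R v) = of_real r * ip x v"
proof -
  have "(r *\<^sub>R v) $ i = of_real r * v $ i" for i
    unfolding vector_scaleR_component by (simp add: scaleR_conv_of_real)
  then show ?thesis by (simp add: ip_def sum_distrib_left mult_ac)
qed

lemma ip_neg_right: "ip x (- v) = - ip x v"
  by (simp add: ip_def sum_negf)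

lemma matrix_sum_outer: "M = (\<Sum>l\<in>UNIV. outer (M *v axis l 1) (axis l 1))"
proof -
  have "M $ a $ b = (\<Sum>l\<in>UNIV. outer (M *v axis l 1) (axis l 1) $ a $ b)" for a b
  proof -
    have "outer (M *v axis l 1) (axis l 1) $ a $ b = (if l = b then M $ a $ b else 0)" for l
      by (simp add: outer_def col_entry, simp add: axis_def)
    then show ?thesis by simp
  qed
  then show ?thesis by (simp add: vec_eq_iff sum_component)
qed

context adjp
begin

lemma ker_step1:
  assumes pos: "positive_map \<phi>" and Z: "psd Z" and Zi: "Z ** Zi = mat 1" and w: "\<phi>s Z *v w = 0"
  shows "\<phi>s (outer y y) *v w = 0"
proof -
  have hZ: "cadj Z = Z" and pZ: "\<And>x. Re (ip x (Z *v x)) \<ge> 0" using Z psd_iff by auto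
  define u where "u = Zi *v y"
  have Zu: "Z *v u = y" unfolding u_def by (simp add: matrix_vector_mul_assoc Zi)
  define c where "c = 1 / (1 + Re (ip u (Z *v u)))"
  have c0: "c > 0" unfolding c_def using pZ[of u] by simp
  have cu: "c * Re (ip u (Z *v u)) \<le> 1" unfolding c_def using pZ[of u] by (simp add: field_simps)
  have psd1: "psd (Z - c *\<^sub>R outer y y)"
    unfolding psd_iff
  proof (intro conjI allI)
    show "cadj (Z - c *\<^sub>R outer y y) = Z - c *\<^sub>R outer y y"
      by (simp add: cadj_diff cadj_scaleR cadj_outer hZ)
    fix x
    have "ip x (outer y y *v x) = ip y x * cnj (ip y x)"
      by (simp add: outer_mv ip_smult_right ip_cnj[of x y] mult.commute)
    then have o: "Re (ip x (outer y y *v x)) = (cmod (ip y x))^2"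
      by (simp add: complex_mult_cnj cmod_power2)
    have "ip y x = ip u (Z *v x)" using Zu ip_herm[OF hZ, of u x] by simp
    then have cs: "(cmod (ip y x))^2 \<le> Re (ip u (Z *v u)) * Re (ip x (Z *v x))"
      using cs_psd[OF hZ pZ, of u x] by simp
    have "c * (cmod (ip y x))^2 \<le> c * (Re (ip u (Z *v u)) * Re (ip x (Z *v x)))"
      using cs c0 by (simp add: mult_left_mono)
    also have "\<dots> = (c * Re (ip u (Z *v u))) * Re (ip x (Z *v x))" by simp
    also have "\<dots> \<le> Re (ip x (Z *v x))" using mult_right_mono[OF cu pZ[of x]]
      by simp
    finally have "c * (cmod (ip y x))^2 \<le> Re (ip x (Z *v x))" .
    then show "Re (ip x ((Z - c *\<^sub>R outer y y) *v x)) \<ge> 0"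
      by (simp add: matrix_vector_mult_diff_rdistrib scaleR_mv ip_diff_right ip_scaleR_right o)
  qed
  have "psd (\<phi>s Z - c *\<^sub>R \<phi>s (outer y y))"
    using phis_psd[OF pos psd1] by (simp add: phis_diff phis_scaleR)
  then have "Re (ip w ((\<phi>s Z - c *\<^sub>R \<phi>s (outer y y)) *v w)) \<ge> 0" using psd_iff by blast
  then have "c * Re (ip w (\<phi>s (outer y y) *v w)) \<le> 0"
    by (simp add: matrix_vector_mult_diff_rdistrib scaleR_mv ip_diff_right ip_scaleR_right w ip_neg_right)
  then have le: "Re (ip w (\<phi>s (outer y y) *v w)) \<le> 0" using c0
    by (simp add: mult_le_0_iff)
  have ps: "psd (\<phi>s (outer y y))" by (rule phis_psd[OF pos outer_psd])
  then have "Re (ip w (\<phi>s (outer y y) *v w)) \<ge> 0" using psd_iff by blast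
  then have "Re (ip w (\<phi>s (outer y y) *v w)) = 0" using le by simp
  then show ?thesis by (rule psd_kernel[OF ps])
qed

lemma phis_zero: "\<phi>s 0 = 0"
  using phis_scaleR[of 0 0] by simp

lemma ker_all:
  assumes pos: "positive_map \<phi>" and Z: "psd Z" and Zi: "Z ** Zi = mat 1" and w: "\<phi>s Z *v w = 0"
  shows "cadj (\<phi>s K) *v w = 0"
proof -
  define L where "L M = cadj (\<phi>s M) *v w" for M
  have Ladd: "L (A + B) = L A + L B" for A B
    by (simp add: L_def phis_add cadj_add matrix_vector_mult_add_rdistrib)
  have Lsc: "L (cscale c A) = cnj c *s L A" for c A
    by (simp add: L_def phis_cscale cadj_cscale cscale_mv)
  have L0: "L 0 = 0" by (simp add: L_def phis_zero)
  have Lyy: "L (outer y y) = 0" for y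
  proof -
    have "psd (\<phi>s (outer y y))" by (rule phis_psd[OF pos outer_psd])
    then have "cadj (\<phi>s (outer y y)) = \<phi>s (outer y y)" using psd_iff by blast
    then show ?thesis using ker_step1[OF pos Z Zi w] by (simp add: L_def)
  qed
  have Lxy: "L (outer x y) = 0" for x y
  proof -
    have "4 *s L (outer x y) = L (cscale 4 (outer x y))" by (simp add: Lsc)
    also have "\<dots> = 0" unfolding polar_outer by (simp add: Ladd Lsc Lyy)
    finally show ?thesis by (simp add: vec_eq_iff)
  qed
  have "L K = L (\<Sum>l\<in>UNIV. outer (K *v axis l 1) (axis l 1))"
    using matrix_sum_outer[of K] by simp
  also have "\<dots> = (\<Sum>l\<in>UNIV. (L \<circ> (\<lambda>l. outer (K *v axis l 1) (axis l 1))) l)"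
    by (rule sum_comp_morphism[symmetric]) (auto simp: L0 Ladd)
  also have "\<dots> = 0" by (simp add: Lxy)
  finally show ?thesis by (simp add: L_def)
qed

end

lemma mm_scaleR_r: "(A::complex^'n^'n) ** (r *\<^sub>R B) = r *\<^sub>R (A ** B)"
  by (simp add: matrix_scalar_ac scalar_matrix_assoc)
lemma mm_scaleR_l: "(r *\<^sub>R (A::complex^'n^'n)) ** B = r *\<^sub>R (A ** B)"
  by (simp add: scalar_matrix_assoc)

lemma zfacts:
  fixes X K :: "complex^'n^'n"
  assumes X: "psd X" and kX: "ker X \<subseteq> ker (cadj K)" and e: "e > 0"
  defines "P \<equiv> mat 1 - X ** mp_inv X"
  shows "psd (X + e *\<^sub>R P)" "ker (X + e *\<^sub>R P) \<subseteq> ker (cadj K)"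
    "mp_inv (X + e *\<^sub>R P) = mp_inv X + (1/e) *\<^sub>R P"
    "(X + e *\<^sub>R P) ** (mp_inv X + (1/e) *\<^sub>R P) = mat 1"
    "cadj K ** (mp_inv X + (1/e) *\<^sub>R P) ** K = cadj K ** mp_inv X ** K"
proof -
  have hX: "cadj X = X" and pX: "\<And>x. Re (ip x (X *v x)) \<ge> 0" using X psd_iff by auto
  define Xp where "Xp = mp_inv X"
  have pen: "pen X Xp" unfolding Xp_def by (rule mp_inv_pen[OF hX])
  then have p1: "X ** Xp ** X = X" and p2: "Xp ** X ** Xp = Xp" and p3: "cadj (X ** Xp) = X ** Xp"
    unfolding pen_def by auto
  have hXp: "cadj Xp = Xp" and com: "X ** Xp = Xp ** X" using mp_inv_herm[OF hX] Xp_def by auto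
  have Pd: "P = mat 1 - X ** Xp" by (simp add: P_def Xp_def)
  have hP: "cadj P = P" by (simp add: Pd cadj_diff p3)
  have XP: "X ** P = 0"
  proof -
    have "X ** P = X - X ** (Xp ** X)" by (simp add: Pd mm_diff_l com)
    then show ?thesis using p1 by (simp add: matrix_mul_assoc)
  qed
  have PX: "P ** X = 0" using p1 by (simp add: Pd mm_diff_r)
  have XpP: "Xp ** P = 0"
  proof -
    have "Xp ** P = Xp - Xp ** (X ** Xp)" by (simp add: Pd mm_diff_l)
    then show ?thesis using p2 by (simp add: matrix_mul_assoc)
  qed
  have PXp: "P ** Xp = 0"
  proof -
    have "P ** Xp = Xp - X ** Xp ** Xp" by (simp add: Pd mm_diff_r)
    also have "X ** Xp ** Xp = Xp ** X ** Xp" using com by simp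
    finally show ?thesis using p2 by simp
  qed
  have PP: "P ** P = P"
  proof -
    have "P ** P = P - X ** Xp ** P" by (simp add: Pd mm_diff_r)
    also have "X ** Xp ** P = 0" using XpP by (simp flip: matrix_mul_assoc)
    finally show ?thesis by simp
  qed
  have PK: "P ** K = 0"
  proof -
    have "cadj K ** P = 0"
    proof (rule matrix_eq_mv)
      fix x
      have "X *v (P *v x) = 0" using XP by (simp add: matrix_vector_mul_assoc)
      then have "cadj K *v (P *v x) = 0" using kX unfolding ker_def by blast
      then show "(cadj K ** P) *v x = 0 *v x" by (simp add: matrix_vector_mul_assoc)
    qed
    then have "cadj (cadj K ** P) = 0" by simp
    then show ?thesis by (simp add: cadj_mult hP)
  qed
  define Z where "Z = X + e *\<^sub>R P"
  define Zi where "Zi = Xp + (1/e) *\<^sub>R P"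
  have ZZi: "Z ** Zi = mat 1"
  proof -
    have "Z ** Zi = X ** Xp + (1/e) *\<^sub>R (X ** P) + e *\<^sub>R (P ** Xp) + (e * (1/e)) *\<^sub>R (P ** P)"
      by (simp add: Z_def Zi_def matrix_add_ldistrib mm_add_r mm_scaleR_r mm_scaleR_l scaleR_add_right)
    also have "\<dots> = X ** Xp + P" using e by (simp add: XP PXp PP)
    also have "\<dots> = mat 1" by (simp add: Pd)
    finally show ?thesis .
  qed
  have ZiZ: "Zi ** Z = mat 1"
  proof -
    have "Zi ** Z = Xp ** X + e *\<^sub>R (Xp ** P) + (1/e) *\<^sub>R (P ** X) + ((1/e) * e) *\<^sub>R (P ** P)"
      by (simp add: Z_def Zi_def matrix_add_ldistrib mm_add_r mm_scaleR_r mm_scaleR_l algebra_simps)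
    also have "\<dots> = Xp ** X + P" using e by (simp add: XpP PX PP)
    also have "\<dots> = mat 1" by (simp add: Pd com)
    finally show ?thesis .
  qed
  have "pen Z Zi" unfolding pen_def using ZZi ZiZ by (simp flip: matrix_mul_assoc)
  then show "mp_inv (X + e *\<^sub>R P) = mp_inv X + (1/e) *\<^sub>R P"
    using mp_inv_eq Z_def Zi_def Xp_def by simp
  show "(X + e *\<^sub>R P) ** (mp_inv X + (1/e) *\<^sub>R P) = mat 1" using ZZi Z_def Zi_def Xp_def by simp
  show "psd (X + e *\<^sub>R P)"
    unfolding psd_iff
  proof (intro conjI allI)
    show "cadj (X + e *\<^sub>R P) = X + e *\<^sub>R P" by (simp add: cadj_add cadj_scaleR hX hP)
    fix x
    have "ip x (P *v x) = ip (P *v x) (P *v x)"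
      using ip_herm[OF hP, of x "P *v x"] PP by (simp add: matrix_vector_mul_assoc)
    then have "Re (ip x (P *v x)) \<ge> 0" by (simp add: ip_self_Re sum_nonneg)
    then show "Re (ip x ((X + e *\<^sub>R P) *v x)) \<ge> 0"
      using pX[of x] e by (simp add: matrix_vector_mult_add_rdistrib scaleR_mv ip_add_right ip_scaleR_right)
  qed
  show "ker (X + e *\<^sub>R P) \<subseteq> ker (cadj K)"
  proof
    fix x assume "x \<in> ker (X + e *\<^sub>R P)"
    then have "Z *v x = 0" by (simp add: ker_def Z_def)
    then have "x = 0" using ZiZ by (metis matrix_vector_mul_assoc matrix_vector_mul_lid matrix_vector_mult_0_right)
    then show "x \<in> ker (cadj K)" by (simp add: ker_def)
  qed
  show "cadj K ** (mp_inv X + (1/e) *\<^sub>R P) ** K = cadj K ** mp_inv X ** K"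
    by (simp add: matrix_add_ldistrib mm_add_r mm_scaleR_r mm_scaleR_l PK flip: Xp_def matrix_mul_assoc)
qed

lemma trace_form:
  fixes B M :: "complex^'n^'n"
  shows "trace (cadj B ** M ** B) = (\<Sum>j\<in>UNIV. ip (B *v axis j 1) (M *v (B *v axis j 1)))"
proof -
  have "ip (B *v axis j 1) (M *v (B *v axis j 1)) = (cadj B ** M ** B) $ j $ j" for j :: "'n::finite"
    apply (unfold col_eq)
    apply (simp add: ip_def matrix_vector_mult_def matrix_matrix_mult_def cadj_def
        sum_distrib_left sum_distrib_right)
    apply (subst sum.swap)
    apply (auto intro!: sum.cong simp: mult_ac)
    done
  then show ?thesis by (simp add: trace_def)
qed

context adjp
begin

lemma core:
  fixes K X :: "complex^'m^'m"
  assumes pos: "positive_map \<phi>" and X: "psd X" and kX: "ker X \<subseteq> ker (cadj K)"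
    and v: "\<phi>s X *v v = 0"
    and bound: "\<And>e. e > 0 \<Longrightarrow> Re (trace (cadj (\<phi>s K) ** mp_inv (\<phi>s (X + e *\<^sub>R (mat 1 - X ** mp_inv X))) ** \<phi>s K)) \<le> L"
  shows "cadj (\<phi>s K) *v v = 0"
proof (rule ccontr)
  assume nz: "cadj (\<phi>s K) *v v \<noteq> 0"
  define P where "P = mat 1 - X ** mp_inv X"
  define B where "B = \<phi>s K"
  define b where "b j = B *v axis j 1" for j
  define \<beta> where "\<beta> = (\<Sum>j\<in>UNIV. (cmod (ip v (b j)))^2)"
  define c where "c = Re (ip v (\<phi>s P *v v))"
  have comp: "(cadj B *v v) $ j = cnj (ip v (b j))" for j
  proof -
    have "ip v (b j) = ip (cadj B *v v) (axis j 1)" by (simp add: b_def ip_mat)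
    then have "cnj (ip v (b j)) = ip (axis j 1) (cadj B *v v)" by (metis ip_cnj)
    then show ?thesis by (simp add: ip_axis)
  qed
  have \<beta>pos: "\<beta> > 0"
  proof -
    obtain j where "(cadj B *v v) $ j \<noteq> 0" using nz B_def by (auto simp: vec_eq_iff)
    then have j: "(cmod (ip v (b j)))^2 > 0" using comp by simp
    have "(cmod (ip v (b j)))^2 \<le> \<beta>" unfolding \<beta>_def
      by (rule member_le_sum) auto
    then show ?thesis using j by linarith
  qed
  have step: "\<beta> \<le> e * c * Re (trace (cadj B ** mp_inv (\<phi>s (X + e *\<^sub>R P)) ** B)) \<and> e * c \<ge> 0"
    if e: "e > 0" for e
  proof -
    note zf = zfacts[OF X kX e, folded P_def]
    define A where "A = \<phi>s (X + e *\<^sub>R P)"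
    have psdA: "psd A" unfolding A_def by (rule phis_psd[OF pos zf(1)])
    then have hA: "cadj A = A" and pA: "\<And>x. Re (ip x (A *v x)) \<ge> 0" using psd_iff by auto
    have kA: "cadj B *v w = 0" if "A *v w = 0" for w
      unfolding B_def by (rule ker_all[OF pos zf(1) zf(4)]) (use that A_def in simp)
    have Av: "Re (ip v (A *v v)) = e * c"
      by (simp add: A_def phis_add phis_scaleR matrix_vector_mult_add_rdistrib scaleR_mv v
          ip_add_right ip_scaleR_right c_def)
    define Ai where "Ai = mp_inv A"
    have pen: "pen A Ai" unfolding Ai_def by (rule mp_inv_pen[OF hA])
    then have q1: "A ** Ai ** A = A" and q2: "Ai ** A ** Ai = Ai" and q4: "cadj (Ai ** A) = Ai ** A"
      unfolding pen_def by auto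
    have hAi: "cadj Ai = Ai" and com: "A ** Ai = Ai ** A" using mp_inv_herm[OF hA] Ai_def by auto
    define Q where "Q = mat 1 - Ai ** A"
    have AQ: "A ** Q = 0" using q1 by (simp add: Q_def mm_diff_l matrix_mul_assoc)
    have "cadj B ** Q = 0"
    proof (rule matrix_eq_mv)
      fix x
      have "A *v (Q *v x) = 0" using AQ by (simp add: matrix_vector_mul_assoc)
      then have "cadj B *v (Q *v x) = 0" by (rule kA)
      then show "(cadj B ** Q) *v x = 0 *v x" by (simp add: matrix_vector_mul_assoc)
    qed
    then have "cadj (cadj B ** Q) = 0" by simp
    then have "Q ** B = 0" by (simp add: cadj_mult Q_def cadj_diff hA hAi com)
    then have BB: "A ** Ai ** B = B" by (simp add: Q_def mm_diff_r com)
    have each: "(cmod (ip v (b j)))^2 \<le> (e * c) * Re (ip (b j) (Ai *v b j))" for j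
    proof -
      define y where "y = Ai *v b j"
      have "b j = A *v y" unfolding y_def b_def
        using BB by (metis matrix_vector_mul_assoc)
      then have "(cmod (ip v (b j)))^2 \<le> Re (ip v (A *v v)) * Re (ip y (A *v y))"
        using cs_psd[OF hA pA, of v y] by simp
      also have "ip y (A *v y) = ip (b j) (Ai *v b j)"
      proof -
        have "ip y (A *v y) = ip (b j) (Ai *v (A *v y))"
          unfolding y_def using ip_herm[OF hAi, of "b j" "A *v (Ai *v b j)"] by simp
        also have "Ai *v (A *v y) = Ai *v b j" unfolding y_def using q2
          by (simp add: matrix_vector_mul_assoc matrix_mul_assoc)
        finally show ?thesis .
      qed
      finally show ?thesis using Av by simp
    qed
    have "\<beta> \<le> (\<Sum>j\<in>UNIV. (e * c) * Re (ip (b j) (Ai *v b j)))"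
      unfolding \<beta>_def by (rule sum_mono) (rule each)
    also have "\<dots> = e * c * Re (trace (cadj B ** Ai ** B))"
      by (simp add: trace_form b_def Re_sum sum_distrib_left)
    finally have "\<beta> \<le> e * c * Re (trace (cadj B ** Ai ** B))" .
    moreover have "e * c \<ge> 0" using Av pA[of v] by simp
    ultimately show ?thesis by (simp add: Ai_def A_def)
  qed
  have c0: "c \<ge> 0" using step[of 1] by simp
  have bnd: "\<beta> \<le> e * (c * L)" if e: "e > 0" for e
  proof -
    have "Re (trace (cadj B ** mp_inv (\<phi>s (X + e *\<^sub>R P)) ** B)) \<le> L"
      using bound[OF e] by (simp add: B_def P_def)
    then have "e * c * Re (trace (cadj B ** mp_inv (\<phi>s (X + e *\<^sub>R P)) ** B)) \<le> e * c * L"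
      using step[OF e] by (simp add: mult_left_mono)
    then show ?thesis using step[OF e] by simp
  qed
  define e where "e = \<beta> / (2 * (1 + \<bar>c * L\<bar>))"
  have e0: "e > 0" using \<beta>pos by (simp add: e_def)
  have "e * (c * L) \<le> e * \<bar>c * L\<bar>" using e0 by (simp add: mult_left_mono)
  also have "\<dots> < \<beta>"
  proof -
    have "e * \<bar>c * L\<bar> = \<beta> * (\<bar>c * L\<bar> / (2 * (1 + \<bar>c * L\<bar>)))" by (simp add: e_def)
    also have "\<bar>c * L\<bar> / (2 * (1 + \<bar>c * L\<bar>)) < 1" by (simp add: field_simps)
    then have "\<beta> * (\<bar>c * L\<bar> / (2 * (1 + \<bar>c * L\<bar>))) < \<beta> * 1"
      using \<beta>pos by (intro mult_strict_left_mono) auto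
    finally show ?thesis by simp
  qed
  finally show False using bnd[OF e0] by simp
qed

end

theorem lemma2p3:
  fixes \<phi> :: "complex^'n^'n \<Rightarrow> complex^'m^'m"
    and \<phi>s :: "complex^'m^'m \<Rightarrow> complex^'n^'n"
  assumes lin: "clinear_map \<phi>"
    and pos: "positive_map \<phi>"
    and adj: "\<forall>A B. trace (cadj A ** \<phi> B) = trace (cadj (\<phi>s A) ** B)"
    and hyp: "(\<forall>K X. psd X \<and> ker X \<subseteq> ker (cadj K) \<longrightarrow>
                 trace (\<phi>s (cadj K ** mp_inv X ** K))
                   \<ge> trace (cadj (\<phi>s K) ** mp_inv (\<phi>s X) ** \<phi>s K))
            \<or> (\<forall>K X. psd X \<and> ker X \<subseteq> ker (cadj K) \<longrightarrow>
                 trace (cadj K ** mp_inv X ** K)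
                   \<ge> trace (cadj (\<phi>s K) ** mp_inv (\<phi>s X) ** \<phi>s K))"
  shows "\<forall>K X::complex^'m^'m. psd X \<and> ker X \<subseteq> ker (cadj K) \<longrightarrow>
           ker (\<phi>s X) \<subseteq> ker (cadj (\<phi>s K))"
proof -
  interpret adjp \<phi> \<phi>s by unfold_locales (rule adj)
  show ?thesis
  proof (intro allI impI subsetI)
    fix K X :: "complex^'m^'m" and v
    assume KX: "psd X \<and> ker X \<subseteq> ker (cadj K)" and vin: "v \<in> ker (\<phi>s X)"
    have X: "psd X" and kX: "ker X \<subseteq> ker (cadj K)" using KX by auto
    have v: "\<phi>s X *v v = 0" using vin by (simp add: ker_def)
    define P where "P = mat 1 - X ** mp_inv X"
    define R where "R e = trace (cadj (\<phi>s K) ** mp_inv (\<phi>s (X + e *\<^sub>R P)) ** \<phi>s K)" for e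
    obtain L where bound: "\<And>e. e > 0 \<Longrightarrow> Re (R e) \<le> L"
    proof (cases "\<forall>K X. psd X \<and> ker X \<subseteq> ker (cadj K) \<longrightarrow>
                 trace (\<phi>s (cadj K ** mp_inv X ** K))
                   \<ge> trace (cadj (\<phi>s K) ** mp_inv (\<phi>s X) ** \<phi>s K)")
      case True
      have "Re (R e) \<le> Re (trace (\<phi>s (cadj K ** mp_inv X ** K)))" if e: "e > 0" for e
      proof -
        note zf = zfacts[OF X kX e, folded P_def]
        have "trace (\<phi>s (cadj K ** mp_inv (X + e *\<^sub>R P) ** K)) \<ge> R e"
          using True zf(1,2) by (simp add: R_def)
        then show ?thesis using zf(3,5) by (simp add: less_eq_complex_def)
      qed
      then show ?thesis using that by blast
    next
      case False
      then have H: "\<forall>K X. psd X \<and> ker X \<subseteq> ker (cadj K) \<longrightarrow>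
                 trace (cadj K ** mp_inv X ** K)
                   \<ge> trace (cadj (\<phi>s K) ** mp_inv (\<phi>s X) ** \<phi>s K)" using hyp by blast
      have "Re (R e) \<le> Re (trace (cadj K ** mp_inv X ** K))" if e: "e > 0" for e
      proof -
        note zf = zfacts[OF X kX e, folded P_def]
        have "trace (cadj K ** mp_inv (X + e *\<^sub>R P) ** K) \<ge> R e"
          using H zf(1,2) by (simp add: R_def)
        then show ?thesis using zf(3,5) by (simp add: less_eq_complex_def)
      qed
      then show ?thesis using that by blast
    qed
    have "cadj (\<phi>s K) *v v = 0"
      by (rule core[OF pos X kX v]) (use bound in \<open>simp add: R_def P_def\<close>)
    then show "v \<in> ker (cadj (\<phi>s K))" by (simp add: ker_def)
  qed
qed


end
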